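(* Under the standing assumptions below, for every nonempty bounded open interval $J\subset\mathbb R$, $$\lambda(J)\ge\frac{\pi^2}{\big(⨍_J \tfrac1p\big)\Big(⨍_J w+\pi^2⨍_J\Big|w-\frac{⨍_J w}{⨍_J 1/p}\,\frac1p\Big|\Big)\mathcal L(J)^2},$$ where $⨍_J g=\frac{1}{\mathcal L(J)}\int_J g\,dx$.
   Context: Standing assumptions: $1<\beta<\infty$; $q\in L^\infty(\mathbb R)$ with $0\le q\le\beta$ a.e.; $p,w\in L^\infty(\mathbb R)$ with $1/\beta\le p\le\beta$ and $1/\beta\le w\le\beta$ a.e. For a nonempty bounded open interval $J$, $\lambda(J)=\min_{u\in H^1_0(J),u\ne0}\frac{\int_J p u'^2\,dx+\int_J q u^2\,dx}{\int_J w u^2\,dx}$. $\mathcal L$ denotes Lebesgue measure. *)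

theory Defs
  imports "HOL-Analysis.Analysis"
begin

text \<open>One-dimensional H^1_0((a,b)): u is (on [a,b]) the primitive of a function
  g in L^2(a,b) (g is then the weak derivative u'), vanishing at a and b.\<close>
definition H10 :: "real \<Rightarrow> real \<Rightarrow> (real \<Rightarrow> real) \<Rightarrow> (real \<Rightarrow> real) \<Rightarrow> bool" where
  "H10 a b u g \<longleftrightarrow>
     g \<in> borel_measurable lebesgue \<and>
     set_integrable lebesgue {a<..<b} g \<and>
     set_integrable lebesgue {a<..<b} (\<lambda>x. (g x)\<^sup>2) \<and>
     (\<forall>x\<in>{a..b}. u x = (LINT t:{a<..<x}|lebesgue. g t)) \<and>
     u b = 0"

definition rayleigh :: "real \<Rightarrow> real \<Rightarrow> (real \<Rightarrow> real) \<Rightarrow> (real \<Rightarrow> real) \<Rightarrow> (real \<Rightarrow> real)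
    \<Rightarrow> (real \<Rightarrow> real) \<Rightarrow> (real \<Rightarrow> real) \<Rightarrow> real" where
  "rayleigh a b p q w u g =
     ((LINT x:{a<..<b}|lebesgue. p x * (g x)\<^sup>2) + (LINT x:{a<..<b}|lebesgue. q x * (u x)\<^sup>2))
     / (LINT x:{a<..<b}|lebesgue. w x * (u x)\<^sup>2)"

definition lambdaJ :: "real \<Rightarrow> real \<Rightarrow> (real \<Rightarrow> real) \<Rightarrow> (real \<Rightarrow> real) \<Rightarrow> (real \<Rightarrow> real) \<Rightarrow> real" where
  "lambdaJ a b p q w =
     Inf {rayleigh a b p q w u g | u g. H10 a b u g \<and> (\<exists>x\<in>{a<..<b}. u x \<noteq> 0)}"

definition avg :: "real \<Rightarrow> real \<Rightarrow> (real \<Rightarrow> real) \<Rightarrow> real" where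
  "avg a b f = (LINT x:{a<..<b}|lebesgue. f x) / (b - a)"

end

theory Submission
  imports Defs
begin


lemma prod_integrable:
  fixes F G :: "real \<Rightarrow> real"
  assumes [measurable]: "F \<in> borel_measurable borel" "G \<in> borel_measurable borel"
  assumes iF: "integrable lborel F" and iG: "integrable lborel G"
  shows "integrable (lborel \<Otimes>\<^sub>M lborel) (\<lambda>(x,y). F x * G y)"
proof (rule lborel_pair.Fubini_integrable)
  show "(\<lambda>(x,y). F x * G y) \<in> borel_measurable (lborel \<Otimes>\<^sub>M lborel)" by measurable
  have "integrable lborel (\<lambda>x. \<bar>F x\<bar> * (\<integral>y. \<bar>G y\<bar> \<partial>lborel))"
    using iF by (intro integrable_mult_left) auto
  then show "integrable lborel (\<lambda>x. \<integral>y. norm ((\<lambda>(x,y). F x * G y) (x, y)) \<partial>lborel)"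
    by (simp add: abs_mult)
  show "AE x in lborel. integrable lborel (\<lambda>y. (\<lambda>(x,y). F x * G y) (x, y))"
    using iG by auto
qed

lemma fubini_split:
  fixes F G :: "real \<Rightarrow> real"
  assumes [measurable]: "F \<in> borel_measurable borel" "G \<in> borel_measurable borel"
  assumes iF: "integrable lborel F" and iG: "integrable lborel G"
  shows "(\<integral>x. F x * (\<integral>y. G y * indicator {..<x} y \<partial>lborel) \<partial>lborel)
        + (\<integral>y. G y * (\<integral>x. F x * indicator {..y} x \<partial>lborel) \<partial>lborel)
        = (\<integral>x. F x \<partial>lborel) * (\<integral>y. G y \<partial>lborel)"
proof -
  let ?M = "lborel \<Otimes>\<^sub>M lborel"
  have i: "integrable ?M (\<lambda>(x,y). F x * G y)" by (rule prod_integrable) (use iF iG in auto)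
  have S1: "{(x::real,y). y < x} \<in> sets ?M"
  proof -
    have "{(x::real,y). y < x} = {z \<in> space ?M. snd z < fst z}" by (auto simp: space_pair_measure)
    also have "\<dots> \<in> sets ?M" by measurable
    finally show ?thesis .
  qed
  have S2: "{(x::real,y). x \<le> y} \<in> sets ?M"
  proof -
    have "{(x::real,y). x \<le> y} = {z \<in> space ?M. fst z \<le> snd z}" by (auto simp: space_pair_measure)
    also have "\<dots> \<in> sets ?M" by measurable
    finally show ?thesis .
  qed
  have i1: "integrable ?M (\<lambda>z. indicator {(x,y). y < x} z *\<^sub>R (\<lambda>(x,y). F x * G y) z)"
    by (rule integrable_mult_indicator[OF S1 i])
  have i2: "integrable ?M (\<lambda>z. indicator {(x,y). x \<le> y} z *\<^sub>R (\<lambda>(x,y). F x * G y) z)"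
    by (rule integrable_mult_indicator[OF S2 i])
  have i1': "integrable ?M (\<lambda>(x,y). F x * (G y * indicator {..<x} y))"
  proof -
    have "(\<lambda>z. indicator {(x,y). y < x} z *\<^sub>R (\<lambda>(x,y). F x * G y) z) = (\<lambda>(x,y). F x * (G y * indicator {..<x} y))"
      by (auto split: split_indicator)
    then show ?thesis using i1 by simp
  qed
  have i2': "integrable ?M (\<lambda>(x,y). G y * (F x * indicator {..y} x))"
  proof -
    have "(\<lambda>z. indicator {(x,y). x \<le> y} z *\<^sub>R (\<lambda>(x,y). F x * G y) z) = (\<lambda>(x,y). G y * (F x * indicator {..y} x))"
      by (auto split: split_indicator)
    then show ?thesis using i2 by simp
  qed
  have "(\<integral>x. F x \<partial>lborel) * (\<integral>y. G y \<partial>lborel) = (\<integral>x. (\<integral>y. F x * G y \<partial>lborel) \<partial>lborel)"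
    by simp
  also have "\<dots> = integral\<^sup>L ?M (\<lambda>(x,y). F x * G y)"
    using lborel_pair.integral_fst[OF i] by simp
  also have "\<dots> = integral\<^sup>L ?M (\<lambda>(x,y). F x * (G y * indicator {..<x} y)) + integral\<^sup>L ?M (\<lambda>(x,y). G y * (F x * indicator {..y} x))"
    by (subst Bochner_Integration.integral_add[OF i1' i2', symmetric])
       (auto intro!: Bochner_Integration.integral_cong split: split_indicator simp: algebra_simps)
  also have "integral\<^sup>L ?M (\<lambda>(x,y). F x * (G y * indicator {..<x} y)) = (\<integral>x. F x * (\<integral>y. G y * indicator {..<x} y \<partial>lborel) \<partial>lborel)"
    using lborel_pair.integral_fst[OF i1'] by simp
  also have "integral\<^sup>L ?M (\<lambda>(x,y). G y * (F x * indicator {..y} x)) = (\<integral>y. G y * (\<integral>x. F x * indicator {..y} x \<partial>lborel) \<partial>lborel)"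
    using lborel_pair.integral_snd[of "\<lambda>x y. G y * (F x * indicator {..y} x)"] i2' by simp
  finally show ?thesis by simp
qed


lemma indef_meas:
  fixes \<psi> :: "real \<Rightarrow> real"
  assumes [measurable]: "\<psi> \<in> borel_measurable borel"
  shows "(\<lambda>x. LINT t:{a<..<x}|lborel. \<psi> t) \<in> borel_measurable borel"
proof -
  have "(\<lambda>x. LINT t:{a<..<x}|lborel. \<psi> t) = (\<lambda>x. \<integral>t. (if a < t \<and> t < x then \<psi> t else 0) \<partial>lborel)"
    by (auto simp: set_lebesgue_integral_def split: split_indicator intro!: ext Bochner_Integration.integral_cong)
  also have "\<dots> \<in> borel_measurable borel"
    by (rule lborel.borel_measurable_lebesgue_integral) measurable
  finally show ?thesis .
qed

lemma indef_bound:
  fixes \<psi> :: "real \<Rightarrow> real"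
  assumes [measurable]: "\<psi> \<in> borel_measurable borel"
  assumes i: "set_integrable lborel {a<..<b} \<psi>" and "x \<le> b"
  shows "\<bar>LINT t:{a<..<x}|lborel. \<psi> t\<bar> \<le> (LINT t:{a<..<b}|lborel. \<bar>\<psi> t\<bar>)"
proof -
  have ix: "set_integrable lborel {a<..<x} \<psi>"
    by (rule set_integrable_subset[OF i]) (use assms in auto)
  have "\<bar>LINT t:{a<..<x}|lborel. \<psi> t\<bar> \<le> (LINT t:{a<..<x}|lborel. \<bar>\<psi> t\<bar>)"
    using ix unfolding set_lebesgue_integral_def set_integrable_def
    by (metis (no_types, lifting) integral_abs_bound Bochner_Integration.integral_cong abs_mult abs_indicator real_norm_def real_scaleR_def)
  also have "\<dots> \<le> (LINT t:{a<..<b}|lborel. \<bar>\<psi> t\<bar>)"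
    using set_integrable_abs[OF i] set_integrable_abs[OF ix] \<open>x \<le> b\<close>
    unfolding set_lebesgue_integral_def set_integrable_def
    by (intro integral_mono) (auto split: split_indicator)
  finally show ?thesis .
qed

lemma set_integrable_mult_bounded:
  fixes \<phi> f :: "real \<Rightarrow> real"
  assumes [measurable]: "\<phi> \<in> borel_measurable borel" "f \<in> borel_measurable borel"
  assumes i: "set_integrable lborel {a<..<b} \<phi>" and bd: "\<And>x. x \<in> {a<..<b} \<Longrightarrow> \<bar>f x\<bar> \<le> C"
  shows "set_integrable lborel {a<..<b} (\<lambda>x. \<phi> x * f x)"
proof (rule set_integrable_bound[OF set_integrable_mult_left[OF i, of C]])
  show "set_borel_measurable lborel {a<..<b} (\<lambda>x. \<phi> x * f x)"
    unfolding set_borel_measurable_def by measurable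
  show "AE x in lborel. x \<in> {a<..<b} \<longrightarrow> norm (\<phi> x * f x) \<le> norm (\<phi> x * C)"
  proof (intro AE_I2 impI)
    fix x assume x: "x \<in> {a<..<b}"
    have "\<bar>\<phi> x\<bar> * \<bar>f x\<bar> \<le> \<bar>\<phi> x\<bar> * C" using bd[OF x] by (simp add: mult_left_mono)
    moreover have "C \<ge> 0" using bd[OF x] by linarith
    ultimately show "norm (\<phi> x * f x) \<le> norm (\<phi> x * C)" by (simp add: abs_mult)
  qed
qed


lemma ibp:
  fixes \<phi> \<psi> :: "real \<Rightarrow> real"
  assumes [measurable]: "\<phi> \<in> borel_measurable borel" "\<psi> \<in> borel_measurable borel"
  assumes ip: "set_integrable lborel {a<..<b} \<phi>" and iq: "set_integrable lborel {a<..<b} \<psi>"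
  shows "set_integrable lborel {a<..<b} (\<lambda>x. \<phi> x * (LINT t:{a<..<x}|lborel. \<psi> t))"
    and "set_integrable lborel {a<..<b} (\<lambda>x. (LINT t:{a<..<x}|lborel. \<phi> t) * \<psi> x)"
    and "(LINT x:{a<..<b}|lborel. \<phi> x * (LINT t:{a<..<x}|lborel. \<psi> t))
       + (LINT x:{a<..<b}|lborel. (LINT t:{a<..<x}|lborel. \<phi> t) * \<psi> x)
       = (LINT x:{a<..<b}|lborel. \<phi> x) * (LINT x:{a<..<b}|lborel. \<psi> x)"
proof -
  note m1[measurable] = indef_meas[of \<psi> a] indef_meas[of \<phi> a]
  show "set_integrable lborel {a<..<b} (\<lambda>x. \<phi> x * (LINT t:{a<..<x}|lborel. \<psi> t))"
    by (rule set_integrable_mult_bounded[OF _ _ ip, where C="LINT t:{a<..<b}|lborel. \<bar>\<psi> t\<bar>"])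
       (auto intro!: indef_bound[OF _ iq])
  have "set_integrable lborel {a<..<b} (\<lambda>x. \<psi> x * (LINT t:{a<..<x}|lborel. \<phi> t))"
    by (rule set_integrable_mult_bounded[OF _ _ iq, where C="LINT t:{a<..<b}|lborel. \<bar>\<phi> t\<bar>"])
       (auto intro!: indef_bound[OF _ ip])
  then show "set_integrable lborel {a<..<b} (\<lambda>x. (LINT t:{a<..<x}|lborel. \<phi> t) * \<psi> x)"
    by (simp add: mult.commute)
  define F where "F x = indicator {a<..<b} x * \<phi> x" for x
  define G where "G x = indicator {a<..<b} x * \<psi> x" for x
  have [measurable]: "F \<in> borel_measurable borel" "G \<in> borel_measurable borel"
    unfolding F_def G_def by measurable
  have iF: "integrable lborel F" using ip unfolding F_def set_integrable_def by simp
  have iG: "integrable lborel G" using iq unfolding G_def set_integrable_def by simp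
  have e1: "(\<integral>x. F x * (\<integral>y. G y * indicator {..<x} y \<partial>lborel) \<partial>lborel)
      = (LINT x:{a<..<b}|lborel. \<phi> x * (LINT t:{a<..<x}|lborel. \<psi> t))"
    unfolding set_lebesgue_integral_def
  proof (intro Bochner_Integration.integral_cong refl)
    fix x
    show "F x * (\<integral>y. G y * indicator {..<x} y \<partial>lborel) = indicator {a<..<b} x *\<^sub>R (\<phi> x * (\<integral>t. indicator {a<..<x} t *\<^sub>R \<psi> t \<partial>lborel))"
    proof (cases "x \<in> {a<..<b}")
      case True
      then have "(\<integral>y. G y * indicator {..<x} y \<partial>lborel) = (\<integral>t. indicator {a<..<x} t *\<^sub>R \<psi> t \<partial>lborel)"
        unfolding G_def by (intro Bochner_Integration.integral_cong) (auto split: split_indicator)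
      then show ?thesis using True unfolding F_def by simp
    qed (simp add: F_def)
  qed
  have e2: "(\<integral>y. G y * (\<integral>x. F x * indicator {..y} x \<partial>lborel) \<partial>lborel)
      = (LINT x:{a<..<b}|lborel. (LINT t:{a<..<x}|lborel. \<phi> t) * \<psi> x)"
    unfolding set_lebesgue_integral_def
  proof (intro Bochner_Integration.integral_cong refl)
    fix y
    show "G y * (\<integral>x. F x * indicator {..y} x \<partial>lborel) = indicator {a<..<b} y *\<^sub>R ((\<integral>t. indicator {a<..<y} t *\<^sub>R \<phi> t \<partial>lborel) * \<psi> y)"
    proof (cases "y \<in> {a<..<b}")
      case True
      then have "(\<integral>x. F x * indicator {..y} x \<partial>lborel) = (\<integral>t. indicator {a<..<y} t *\<^sub>R \<phi> t \<partial>lborel)"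
        unfolding F_def
        by (intro integral_cong_AE) (auto intro!: eventually_mono[OF AE_lborel_singleton[of y]] split: split_indicator)
      then show ?thesis using True unfolding G_def by simp
    qed (simp add: G_def)
  qed
  have e3: "(\<integral>x. F x \<partial>lborel) * (\<integral>y. G y \<partial>lborel) = (LINT x:{a<..<b}|lborel. \<phi> x) * (LINT x:{a<..<b}|lborel. \<psi> x)"
    unfolding F_def G_def set_lebesgue_integral_def by simp
  show "(LINT x:{a<..<b}|lborel. \<phi> x * (LINT t:{a<..<x}|lborel. \<psi> t))
       + (LINT x:{a<..<b}|lborel. (LINT t:{a<..<x}|lborel. \<phi> t) * \<psi> x)
       = (LINT x:{a<..<b}|lborel. \<phi> x) * (LINT x:{a<..<b}|lborel. \<psi> x)"
    using fubini_split[OF _ _ iF iG] e1 e2 e3 by simp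
qed




lemma set_integrable_const_Ioo: fixes l u :: real shows "set_integrable lborel {l<..<u} (\<lambda>_. c::real)"
proof -
  have "emeasure lborel {l<..<u} < \<infinity>"
  proof (cases "l \<le> u")
    case True then show ?thesis by (simp add: ennreal_less_top)
  next
    case False then have "{l<..<u} = {}" by auto
    then show ?thesis by simp
  qed
  then have "integrable lborel (indicat_real {l<..<u})" by (intro integrable_real_indicator) auto
  then show ?thesis unfolding set_integrable_def by simp
qed

lemma set_integral_const_Ioo: fixes l u :: real shows "l \<le> u \<Longrightarrow> (LINT x:{l<..<u}|lborel. (c::real)) = c * (u - l)"
  by (subst set_integral_const) auto

lemma set_integrable_bounded_Ioo:
  fixes f :: "real \<Rightarrow> real"
  assumes [measurable]: "f \<in> borel_measurable borel" and "\<And>x. \<bar>f x\<bar> \<le> C"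
  shows "set_integrable lborel {l<..<u} f"
  by (rule set_integrable_bound[OF set_integrable_const_Ioo[of l u C]])
     (use assms(2) in \<open>auto simp: set_borel_measurable_def intro!: AE_I2 order_trans[OF _ abs_ge_self]\<close>)

lemma split_Ioo:
  fixes f :: "real \<Rightarrow> real"
  assumes [measurable]: "f \<in> borel_measurable borel"
  assumes i: "set_integrable lborel {a<..<c} f" and "a \<le> b" "b \<le> c"
  shows "(LINT x:{a<..<c}|lborel. f x) = (LINT x:{a<..<b}|lborel. f x) + (LINT x:{b<..<c}|lborel. f x)"
proof -
  have i1: "set_integrable lborel {a<..<b} f" by (rule set_integrable_subset[OF i]) (use assms in auto)
  have i2: "set_integrable lborel {b<..<c} f" by (rule set_integrable_subset[OF i]) (use assms in auto)
  have "(LINT x:{a<..<c}|lborel. f x) = (\<integral>x. indicator {a<..<b} x * f x + indicator {b<..<c} x * f x \<partial>lborel)"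
    unfolding set_lebesgue_integral_def
    by (intro integral_cong_AE) (use assms in \<open>auto intro!: eventually_mono[OF AE_lborel_singleton[of b]] split: split_indicator\<close>)
  also have "\<dots> = (LINT x:{a<..<b}|lborel. f x) + (LINT x:{b<..<c}|lborel. f x)"
    using i1 i2 unfolding set_lebesgue_integral_def set_integrable_def by simp
  finally show ?thesis .
qed

locale wt =
  fixes p :: "real \<Rightarrow> real" and \<beta> a :: real
  assumes pm[measurable]: "p \<in> borel_measurable borel"
    and plo: "\<And>x. 1/\<beta> \<le> p x" and phi: "\<And>x. p x \<le> \<beta>" and \<beta>1: "1 < \<beta>"
begin

definition s where "s x = (LINT t:{a<..<x}|lborel. 1 / p t)"

lemma ppos: "0 < p x"
proof -
  have "0 < 1/\<beta>" using \<beta>1 by simp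
  then show ?thesis using plo[of x] by linarith
qed

lemma ip_bd: "\<bar>1 / p x\<bar> \<le> \<beta>"
proof -
  have "1 / p x \<le> 1 / (1/\<beta>)" using plo[of x] \<beta>1 ppos[of x] by (intro divide_left_mono) auto
  then show ?thesis using ppos[of x] by auto
qed

lemma ip_lo: "1 / \<beta> \<le> 1 / p x"
  using phi[of x] ppos[of x] by (intro divide_left_mono) auto

lemma ip_int: "set_integrable lborel {l<..<u} (\<lambda>t. 1 / p t)"
  by (rule set_integrable_bounded_Ioo[OF _ ip_bd]) measurable

lemma s_split: "a \<le> x \<Longrightarrow> x \<le> y \<Longrightarrow> s y = s x + (LINT t:{x<..<y}|lborel. 1 / p t)"
  unfolding s_def by (rule split_Ioo[OF _ ip_int]) auto

lemma int_ip_bounds: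
  assumes "x \<le> y"
  shows "(y - x) / \<beta> \<le> (LINT t:{x<..<y}|lborel. 1 / p t)" "(LINT t:{x<..<y}|lborel. 1 / p t) \<le> \<beta> * (y - x)"
proof -
  have "(LINT t:{x<..<y}|lborel. 1/\<beta>) \<le> (LINT t:{x<..<y}|lborel. 1 / p t)"
    by (rule set_integral_mono[OF set_integrable_const_Ioo ip_int ip_lo])
  then show "(y - x) / \<beta> \<le> (LINT t:{x<..<y}|lborel. 1 / p t)" using assms by (simp add: set_integral_const_Ioo)
  have "(LINT t:{x<..<y}|lborel. 1 / p t) \<le> (LINT t:{x<..<y}|lborel. \<beta>)"
    by (rule set_integral_mono[OF ip_int set_integrable_const_Ioo]) (use abs_le_D1[OF ip_bd] in auto)
  then show "(LINT t:{x<..<y}|lborel. 1 / p t) \<le> \<beta> * (y - x)" using assms by (simp add: set_integral_const_Ioo)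
qed

lemma s_below: "x \<le> a \<Longrightarrow> s x = 0"
  unfolding s_def by (simp add: set_lebesgue_integral_def)

lemma s_a: "s a = 0" by (simp add: s_below)

lemma s_mono_strict: assumes "a \<le> x" "x \<le> y" shows "(y - x) / \<beta> \<le> s y - s x"
  using s_split[OF assms] int_ip_bounds(1)[OF assms(2)] by linarith

lemma s_lip_ge: assumes "a \<le> x" "x \<le> y" shows "s y - s x \<le> \<beta> * (y - x)"
  using s_split[OF assms] int_ip_bounds(2)[OF assms(2)] by linarith

lemma s_mono: "x \<le> y \<Longrightarrow> s x \<le> s y"
proof -
  assume xy: "x \<le> y"
  have b0: "0 < \<beta>" using \<beta>1 by simp
  show ?thesis
  proof (cases "a \<le> x")
    case True
    have "0 \<le> (y - x) / \<beta>" using xy b0 by simp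
    then show ?thesis using s_mono_strict[OF True xy] by linarith
  next
    case False
    then have "s x = 0" by (simp add: s_below)
    moreover have "0 \<le> s y"
    proof (cases "a \<le> y")
      case True
      have "0 \<le> (y - a) / \<beta>" using True b0 by simp
      then show ?thesis using s_mono_strict[OF order_refl True] s_a by linarith
    qed (simp add: s_below)
    ultimately show ?thesis by simp
  qed
qed

lemma s_lip1: "x \<le> y \<Longrightarrow> s y - s x \<le> \<beta> * (y - x)"
proof -
  assume xy: "x \<le> y"
  show ?thesis
  proof (cases "a \<le> x")
    case True then show ?thesis using s_lip_ge[OF True xy] by simp
  next
    case False
    then have sx: "s x = 0" by (simp add: s_below)
    show ?thesis
    proof (cases "a \<le> y")
      case True
      have "s y - s a \<le> \<beta> * (y - a)" using s_lip_ge[OF order_refl True] .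
      moreover have "\<beta> * (y - a) \<le> \<beta> * (y - x)" using False \<beta>1 by (intro mult_left_mono) auto
      ultimately show ?thesis using sx s_a by simp
    next
      case False
      then show ?thesis using sx s_below[of y] xy \<beta>1 by simp
    qed
  qed
qed

lemma s_lip: "\<bar>s y - s x\<bar> \<le> \<beta> * \<bar>y - x\<bar>"
proof (cases "x \<le> y")
  case True then show ?thesis using s_lip1[OF True] s_mono[OF True] by simp
next
  case False then show ?thesis using s_lip1[of y x] s_mono[of y x] by simp
qed

lemma s_cont: "continuous_on UNIV s"
proof (rule continuous_onI)
  fix x and e :: real assume "e > 0"
  show "\<exists>d>0. \<forall>x'\<in>UNIV. dist x' x < d \<longrightarrow> dist (s x') (s x) \<le> e"
  proof (intro exI[of _ "e / \<beta>"] conjI ballI impI)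
    show "e / \<beta> > 0" using \<open>e > 0\<close> \<beta>1 by auto
    fix x' assume "dist x' x < e / \<beta>"
    then have "\<beta> * \<bar>x' - x\<bar> \<le> e" using \<beta>1 by (simp add: dist_real_def field_simps)
    then show "dist (s x') (s x) \<le> e" using s_lip[of x' x] by (simp add: dist_real_def)
  qed
qed

lemma s_meas[measurable]: "s \<in> borel_measurable borel"
  using s_cont by (simp add: borel_measurable_continuous_onI)


lemma s_pos: "a < x \<Longrightarrow> 0 < s x"
proof -
  assume ax: "a < x"
  have "0 < (x - a) / \<beta>" using ax \<beta>1 by simp
  then show ?thesis using s_mono_strict[of a x] ax s_a by simp
qed

lemma s_nonneg: "0 \<le> s x"
  by (cases "a < x") (auto simp: s_below dest: s_pos)

lemma s_strict: "a \<le> t \<Longrightarrow> t < x \<Longrightarrow> s t < s x"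
proof -
  assume "a \<le> t" "t < x"
  moreover have "0 < (x - t) / \<beta>" using \<open>t < x\<close> \<beta>1 by simp
  ultimately show ?thesis using s_mono_strict[of t x] by simp
qed

lemma I_calc:
  assumes "a \<le> y"
  shows "(\<integral>x. indicator {a<..<y} x * indicator {x. c < s x} x * (1 / p x) \<partial>lborel)
     = (if c \<le> 0 then s y else if c < s y then s y - c else 0)"
proof -
  have sy: "s y = (\<integral>x. indicator {a<..<y} x * (1 / p x) \<partial>lborel)"
    unfolding s_def set_lebesgue_integral_def by simp
  consider "c \<le> 0" | "0 < c" "c < s y" | "s y \<le> c" by linarith
  then show ?thesis
  proof cases
    case 1
    have "(\<integral>x. indicator {a<..<y} x * indicator {x. c < s x} x * (1 / p x) \<partial>lborel)
        = (\<integral>x. indicator {a<..<y} x * (1 / p x) \<partial>lborel)"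
      using 1 s_pos by (intro Bochner_Integration.integral_cong) (force split: split_indicator)+
    then show ?thesis using 1 sy by simp
  next
    case 2
    obtain t where t: "a \<le> t" "t \<le> y" "s t = c"
      using IVT'[of s a c y] 2 s_a assms continuous_on_subset[OF s_cont] by force
    have "(\<integral>x. indicator {a<..<y} x * indicator {x. c < s x} x * (1 / p x) \<partial>lborel)
        = (\<integral>x. indicator {t<..<y} x * (1 / p x) \<partial>lborel)"
    proof (intro Bochner_Integration.integral_cong refl)
      fix x
      show "indicator {a<..<y} x * indicator {x. c < s x} x * (1 / p x) = indicator {t<..<y} x * (1 / p x)"
      proof (cases "x \<in> {a<..<y}")
        case True
        then show ?thesis using t s_strict[of t x] s_mono[of x t]
          by (cases "t < x") (auto split: split_indicator)
      next
        case False
        then show ?thesis using t by (auto split: split_indicator)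
      qed
    qed
    also have "\<dots> = s y - s t"
      using s_split[OF t(1,2)] unfolding set_lebesgue_integral_def by simp
    finally show ?thesis using 2 t by simp
  next
    case 3
    have "(\<integral>x. indicator {a<..<y} x * indicator {x. c < s x} x * (1 / p x) \<partial>lborel) = (\<integral>x. (0::real) \<partial>lborel)"
    proof -
      have "(\<lambda>x. indicator {a<..<y} x * indicator {x. c < s x} x * (1 / p x)) = (\<lambda>x. 0::real)"
      proof
        fix x
        show "indicator {a<..<y} x * indicator {x. c < s x} x * (1 / p x) = (0::real)"
        proof (cases "x \<in> {a<..<y}")
          case True
          then have "s x \<le> c" using 3 s_mono[of x y] by auto
          then show ?thesis by (simp split: split_indicator)
        qed simp
      qed
      then show ?thesis by simp
    qed
    then show ?thesis using 3 s_nonneg[of y] by auto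
  qed
qed


lemma distr_eq:
  assumes "a \<le> y"
  shows "distr (density lborel (\<lambda>x. ennreal (indicator {a<..<y} x * (1 / p x)))) lborel s
       = density lborel (\<lambda>\<sigma>. ennreal (indicator {0<..<s y} \<sigma>))"
proof (rule measure_eqI_lessThan)
  define h where "h c = (if c \<le> 0 then s y else if c < s y then s y - c else 0)" for c
  have L: "emeasure (distr (density lborel (\<lambda>x. ennreal (indicator {a<..<y} x * (1 / p x)))) lborel s) {c<..} = ennreal (h c)" for c
  proof -
    have "emeasure (distr (density lborel (\<lambda>x. ennreal (indicator {a<..<y} x * (1 / p x)))) lborel s) {c<..}
       = emeasure (density lborel (\<lambda>x. ennreal (indicator {a<..<y} x * (1 / p x)))) (s -` {c<..} \<inter> space lborel)"
      by (subst emeasure_distr) auto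
    also have "\<dots> = (\<integral>\<^sup>+x. ennreal (indicator {a<..<y} x * (1 / p x)) * indicator (s -` {c<..} \<inter> space lborel) x \<partial>lborel)"
      by (rule emeasure_density) (use measurable_sets_borel[OF s_meas, of "{c<..}"] in auto)
    also have "\<dots> = (\<integral>\<^sup>+x. ennreal (indicator {a<..<y} x * indicator {x. c < s x} x * (1 / p x)) \<partial>lborel)"
      by (intro nn_integral_cong) (auto split: split_indicator)
    also have "\<dots> = ennreal (\<integral>x. indicator {a<..<y} x * indicator {x. c < s x} x * (1 / p x) \<partial>lborel)"
    proof (rule nn_integral_eq_integral)
      have "integrable lborel (\<lambda>x. indicator {a<..<y} x *\<^sub>R (1 / p x))"
        using ip_int[of a y] unfolding set_integrable_def .
      then show "integrable lborel (\<lambda>x. indicator {a<..<y} x * indicator {x. c < s x} x * (1 / p x))"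
        by (rule Bochner_Integration.integrable_bound) (auto split: split_indicator)
      show "AE x in lborel. 0 \<le> indicator {a<..<y} x * indicator {x. c < s x} x * (1 / p x)"
        using ppos by (auto intro!: AE_I2 divide_nonneg_pos less_imp_le split: split_indicator)
    qed
    also have "\<dots> = ennreal (h c)" unfolding h_def by (subst I_calc[OF assms]) simp
    finally show ?thesis .
  qed
  have R: "emeasure (density lborel (\<lambda>\<sigma>. ennreal (indicator {0<..<s y} \<sigma>))) {c<..} = ennreal (h c)" for c
  proof -
    have "emeasure (density lborel (\<lambda>\<sigma>. ennreal (indicator {0<..<s y} \<sigma>))) {c<..}
        = (\<integral>\<^sup>+x. ennreal (indicator {0<..<s y} x) * indicator {c<..} x \<partial>lborel)"
      by (rule emeasure_density) auto
    also have "\<dots> = (\<integral>\<^sup>+x. indicator {max 0 c<..<s y} x \<partial>lborel)"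
      by (intro nn_integral_cong) (auto split: split_indicator)
    also have "\<dots> = emeasure lborel {max 0 c<..<s y}" by simp
    also have "\<dots> = ennreal (h c)"
    proof (cases "max 0 c \<le> s y")
      case True then show ?thesis unfolding h_def by (auto simp: max_def)
    next
      case False then have "{max 0 c<..<s y} = {}" by auto
      then show ?thesis using False s_nonneg[of y] unfolding h_def by auto
    qed
    finally show ?thesis .
  qed
  show "sets (distr (density lborel (\<lambda>x. ennreal (indicator {a<..<y} x * (1 / p x)))) lborel s) = sets borel" by simp
  show "sets (density lborel (\<lambda>\<sigma>. ennreal (indicator {0<..<s y} \<sigma>))) = sets borel" by simp
  show "emeasure (distr (density lborel (\<lambda>x. ennreal (indicator {a<..<y} x * (1 / p x)))) lborel s) {c<..} < \<infinity>" for c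
    using L by (simp add: ennreal_less_top)
  show "emeasure (distr (density lborel (\<lambda>x. ennreal (indicator {a<..<y} x * (1 / p x)))) lborel s) {c<..}
      = emeasure (density lborel (\<lambda>\<sigma>. ennreal (indicator {0<..<s y} \<sigma>))) {c<..}" for c
    using L R by simp
qed

end



context wt begin

lemma cv:
  assumes "a \<le> y" and [measurable]: "F \<in> borel_measurable borel"
    and iF: "set_integrable lborel {0<..<s y} F"
  shows "set_integrable lborel {a<..<y} (\<lambda>x. F (s x) / p x)"
    and "(LINT x:{a<..<y}|lborel. F (s x) / p x) = (LINT \<sigma>:{0<..<s y}|lborel. F \<sigma>)"
proof -
  let ?D = "density lborel (\<lambda>x. ennreal (indicator {a<..<y} x * (1 / p x)))"
  let ?E = "density lborel (\<lambda>\<sigma>. ennreal (indicator {0<..<s y} \<sigma>))"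
  have eq: "distr ?D lborel s = ?E" by (rule distr_eq[OF assms(1)])
  have nn: "AE x in lborel. 0 \<le> indicator {a<..<y} x * (1 / p x)"
    using ppos by (auto intro!: AE_I2 less_imp_le split: split_indicator)
  have iE: "integrable ?E F"
    using iF unfolding set_integrable_def by (subst integrable_real_density) auto
  then have "integrable (distr ?D lborel s) F" using eq by simp
  then have "integrable ?D (\<lambda>x. F (s x))" by (subst (asm) integrable_distr_eq) auto
  then have "integrable lborel (\<lambda>x. indicator {a<..<y} x * (1 / p x) * F (s x))"
    using nn by (subst (asm) integrable_real_density) auto
  then show "set_integrable lborel {a<..<y} (\<lambda>x. F (s x) / p x)"
    unfolding set_integrable_def by (simp add: field_simps)
  have "(LINT \<sigma>:{0<..<s y}|lborel. F \<sigma>) = integral\<^sup>L ?E F"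
    unfolding set_lebesgue_integral_def by (subst integral_real_density) auto
  also have "\<dots> = integral\<^sup>L (distr ?D lborel s) F" using eq by simp
  also have "\<dots> = integral\<^sup>L ?D (\<lambda>x. F (s x))" by (rule integral_distr) auto
  also have "\<dots> = (\<integral>x. indicator {a<..<y} x * (1 / p x) * F (s x) \<partial>lborel)"
    using nn by (subst integral_real_density) auto
  also have "\<dots> = (LINT x:{a<..<y}|lborel. F (s x) / p x)"
    unfolding set_lebesgue_integral_def by (simp add: field_simps)
  finally show "(LINT x:{a<..<y}|lborel. F (s x) / p x) = (LINT \<sigma>:{0<..<s y}|lborel. F \<sigma>)" by simp
qed

lemma chain:
  assumes "a \<le> y" "s y \<le> P0"
    and cH: "continuous_on {0..P0} H'"
    and dH: "\<And>\<sigma>. \<sigma> \<in> {0..P0} \<Longrightarrow> (H has_real_derivative H' \<sigma>) (at \<sigma>)"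
  shows "set_integrable lborel {a<..<y} (\<lambda>x. H' (max 0 (min P0 (s x))) / p x)"
    and "(LINT x:{a<..<y}|lborel. H' (max 0 (min P0 (s x))) / p x) = H (s y) - H 0"
proof -
  define F where "F \<sigma> = H' (max 0 (min P0 \<sigma>))" for \<sigma>
  have P0: "0 \<le> P0" using assms(2) s_nonneg[of y] by linarith
  have cF: "continuous_on UNIV F"
    unfolding F_def
    by (rule continuous_on_compose2[OF cH]) (use P0 in \<open>auto intro!: continuous_intros\<close>)
  then have Fm[measurable]: "F \<in> borel_measurable borel" by (simp add: borel_measurable_continuous_onI)
  have "set_integrable lborel {0..s y} F"
    by (rule borel_integrable_atLeastAtMost') (rule continuous_on_subset[OF cF], auto)
  then have iF: "set_integrable lborel {0<..<s y} F"
    by (rule set_integrable_subset) auto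
  note r = cv[OF assms(1) Fm iF]
  show "set_integrable lborel {a<..<y} (\<lambda>x. H' (max 0 (min P0 (s x))) / p x)"
    using r(1) unfolding F_def .
  have "(LINT \<sigma>:{0<..<s y}|lborel. F \<sigma>) = (LBINT \<sigma>=ereal 0..ereal (s y). F \<sigma>)"
    using s_nonneg[of y] by (simp add: interval_integral_Ioo)
  also have "\<dots> = H (s y) - H 0"
  proof (rule interval_integral_FTC_finite)
    show "continuous_on {min 0 (s y)..max 0 (s y)} F" by (rule continuous_on_subset[OF cF]) auto
    fix x assume x: "min 0 (s y) \<le> x" "x \<le> max 0 (s y)"
    then have x': "0 \<le> x" "x \<le> P0" using s_nonneg[of y] assms(2) by auto
    have "(H has_real_derivative H' x) (at x)" using dH x' by auto
    moreover have "F x = H' x" using x' by (simp add: F_def)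
    ultimately show "(H has_vector_derivative F x) (at x within {min 0 (s y)..max 0 (s y)})"
      by (simp add: has_real_derivative_iff_has_vector_derivative has_vector_derivative_at_within)
  qed
  finally show "(LINT x:{a<..<y}|lborel. H' (max 0 (min P0 (s x))) / p x) = H (s y) - H 0"
    using r(2) unfolding F_def by simp
qed

end



lemma set_integral_nonneg_Ioo:
  fixes f :: "real \<Rightarrow> real"
  assumes "\<And>x. x \<in> {l<..<r} \<Longrightarrow> 0 \<le> f x"
  shows "0 \<le> (LINT x:{l<..<r}|lborel. f x)"
  unfolding set_lebesgue_integral_def using assms
  by (intro Bochner_Integration.integral_nonneg) (auto split: split_indicator)

lemma set_integral_cong_Ioo:
  fixes f g :: "real \<Rightarrow> real"
  assumes "\<And>x. x \<in> {l<..<r} \<Longrightarrow> f x = g x"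
  shows "(LINT x:{l<..<r}|lborel. f x) = (LINT x:{l<..<r}|lborel. g x)"
  by (rule set_lebesgue_integral_cong) (use assms in auto)

lemma set_integral_mono_set_Ioo:
  fixes f :: "real \<Rightarrow> real"
  assumes "set_integrable lborel {a<..<b} f" "a \<le> x" "x \<le> b" "\<And>x. x \<in> {a<..<b} \<Longrightarrow> 0 \<le> f x"
  shows "(LINT t:{a<..<x}|lborel. f t) \<le> (LINT t:{a<..<b}|lborel. f t)"
proof -
  have ix: "set_integrable lborel {a<..<x} f" by (rule set_integrable_subset[OF assms(1)]) (use assms in auto)
  show ?thesis using assms(1) ix assms(2-4) unfolding set_lebesgue_integral_def set_integrable_def
    by (intro integral_mono) (auto split: split_indicator)
qed

locale core = wt +
  fixes b :: real and g :: "real \<Rightarrow> real"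
  assumes ab: "a < b" and gm[measurable]: "g \<in> borel_measurable borel"
    and gi: "set_integrable lborel {a<..<b} g" and g2i: "set_integrable lborel {a<..<b} (\<lambda>x. (g x)\<^sup>2)"
    and ub: "(LINT t:{a<..<b}|lborel. g t) = 0"
begin

definition u where "u x = (LINT t:{a<..<x}|lborel. g t)"
definition E where "E = (LINT x:{a<..<b}|lborel. p x * (g x)\<^sup>2)"
definition G where "G = (LINT t:{a<..<b}|lborel. \<bar>g t\<bar>)"

lemma u_meas[measurable]: "u \<in> borel_measurable borel"
  unfolding u_def by (rule indef_meas) simp

lemma u_b: "u b = 0" using ub by (simp add: u_def)

lemma u_a: "u a = 0" by (simp add: u_def set_lebesgue_integral_def)

lemma u_bound: "x \<le> b \<Longrightarrow> \<bar>u x\<bar> \<le> G"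
  unfolding u_def G_def by (rule indef_bound[OF gm gi])

lemma gi_sub: "a \<le> y \<Longrightarrow> y \<le> b \<Longrightarrow> set_integrable lborel {a<..<y} g"
  by (rule set_integrable_subset[OF gi]) auto

lemma pg2_int: "set_integrable lborel {a<..<b} (\<lambda>x. p x * (g x)\<^sup>2)"
proof -
  have "set_integrable lborel {a<..<b} (\<lambda>x. (g x)\<^sup>2 * p x)"
    by (rule set_integrable_mult_bounded[OF _ _ g2i, where C=\<beta>]) (use phi ppos in \<open>auto simp: abs_le_iff less_imp_le intro: order_trans[of _ 0] \<close>)
  then show ?thesis by (simp add: mult.commute)
qed

lemma pg2_nonneg: "0 \<le> p x * (g x)\<^sup>2" using ppos[of x] by simp

lemma E_nonneg: "0 \<le> E" unfolding E_def by (rule set_integral_nonneg_Ioo) (rule pg2_nonneg)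

lemma u_sq:
  assumes "a \<le> y" "y \<le> b"
  shows "set_integrable lborel {a<..<y} (\<lambda>x. 2 * g x * u x)"
    and "(u y)\<^sup>2 = (LINT x:{a<..<y}|lborel. 2 * g x * u x)"
proof -
  note I = ibp[OF gm gm gi_sub[OF assms] gi_sub[OF assms]]
  have i1: "set_integrable lborel {a<..<y} (\<lambda>x. g x * u x)" using I(1) unfolding u_def .
  then show "set_integrable lborel {a<..<y} (\<lambda>x. 2 * g x * u x)"
    using set_integrable_mult_right[OF i1, of 2] by (simp add: mult.assoc)
  have "(u y)\<^sup>2 = (LINT x:{a<..<y}|lborel. g x * u x) + (LINT x:{a<..<y}|lborel. u x * g x)"
    using I(3) unfolding u_def by (simp add: power2_eq_square)
  also have "\<dots> = (LINT x:{a<..<y}|lborel. g x * u x) + (LINT x:{a<..<y}|lborel. g x * u x)"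
    by (simp add: mult.commute)
  also have "\<dots> = (LINT x:{a<..<y}|lborel. 2 * (g x * u x))"
    by (subst set_integral_mult_right) simp
  also have "\<dots> = (LINT x:{a<..<y}|lborel. 2 * g x * u x)"
    by (simp add: mult.assoc)
  finally show "(u y)\<^sup>2 = (LINT x:{a<..<y}|lborel. 2 * g x * u x)" .
qed


lemma cs:
  assumes "a \<le> x" "x \<le> b"
  shows "(u x)\<^sup>2 \<le> s b * E"
proof (cases "x = a")
  case True
  then show ?thesis using u_a s_nonneg[of b] E_nonneg by simp
next
  case False
  then have ax: "a < x" using assms by simp
  have sx: "0 < s x" using s_pos[OF ax] .
  define c where "c = u x / s x"
  define Ex where "Ex = (LINT t:{a<..<x}|lborel. p t * (g t)\<^sup>2)"
  have i1: "set_integrable lborel {a<..<x} (\<lambda>t. p t * (g t)\<^sup>2)"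
    by (rule set_integrable_subset[OF pg2_int]) (use assms in auto)
  have i2: "set_integrable lborel {a<..<x} g" by (rule gi_sub) (use assms in auto)
  have i3: "set_integrable lborel {a<..<x} (\<lambda>t. 1 / p t)" by (rule ip_int)
  have "0 \<le> (LINT t:{a<..<x}|lborel. p t * (g t - c / p t)\<^sup>2)"
    by (rule set_integral_nonneg_Ioo) (metis ppos less_imp_le mult_nonneg_nonneg zero_le_power2)
  also have "\<dots> = (LINT t:{a<..<x}|lborel. (p t * (g t)\<^sup>2 - (2 * c) * g t) + c\<^sup>2 * (1 / p t))"
  proof (rule set_integral_cong_Ioo)
    fix t
    have "p t \<noteq> 0" using ppos[of t] by simp
    then show "p t * (g t - c / p t)\<^sup>2 = (p t * (g t)\<^sup>2 - (2 * c) * g t) + c\<^sup>2 * (1 / p t)"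
      by (simp add: field_simps power2_eq_square)
  qed
  also have "\<dots> = (Ex - 2 * c * u x) + c\<^sup>2 * s x"
  proof -
    have j1: "set_integrable lborel {a<..<x} (\<lambda>t. (2 * c) * g t)" using i2 by simp
    have j2: "set_integrable lborel {a<..<x} (\<lambda>t. c\<^sup>2 * (1 / p t))" using i3 by (rule set_integrable_mult_right)
    have j3: "set_integrable lborel {a<..<x} (\<lambda>t. p t * (g t)\<^sup>2 - (2 * c) * g t)" by (rule set_integral_diff(1)[OF i1 j1])
    have "(LINT t:{a<..<x}|lborel. (p t * (g t)\<^sup>2 - (2 * c) * g t) + c\<^sup>2 * (1 / p t))
        = (LINT t:{a<..<x}|lborel. (p t * (g t)\<^sup>2 - (2 * c) * g t)) + (LINT t:{a<..<x}|lborel. c\<^sup>2 * (1 / p t))"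
      by (rule set_integral_add(2)[OF j3 j2])
    also have "(LINT t:{a<..<x}|lborel. (p t * (g t)\<^sup>2 - (2 * c) * g t)) = Ex - (LINT t:{a<..<x}|lborel. (2 * c) * g t)"
      unfolding Ex_def by (rule set_integral_diff(2)[OF i1 j1])
    also have "(LINT t:{a<..<x}|lborel. (2 * c) * g t) = 2 * c * u x" unfolding u_def by simp
    also have "(LINT t:{a<..<x}|lborel. c\<^sup>2 * (1 / p t)) = c\<^sup>2 * s x" unfolding s_def by (rule set_integral_mult_right)
    finally show ?thesis .
  qed
  also have "\<dots> = Ex - (u x)\<^sup>2 / s x"
    using sx unfolding c_def by (simp add: field_simps power2_eq_square)
  finally have "(u x)\<^sup>2 / s x \<le> Ex" by simp
  then have "(u x)\<^sup>2 \<le> s x * Ex" using sx by (simp add: field_simps)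
  also have "\<dots> \<le> s b * E"
  proof (rule mult_mono)
    show "s x \<le> s b" by (rule s_mono) (use assms in simp)
    show "Ex \<le> E" unfolding Ex_def E_def
      by (rule set_integral_mono_set_Ioo[OF pg2_int]) (use assms pg2_nonneg in auto)
    show "0 \<le> s b" by (rule s_nonneg)
    show "0 \<le> Ex" unfolding Ex_def by (rule set_integral_nonneg_Ioo) (rule pg2_nonneg)
  qed
  finally show ?thesis .
qed

end



lemma bdd_int:
  fixes f :: "real \<Rightarrow> real"
  assumes [measurable]: "f \<in> borel_measurable borel" and bd: "\<And>x. x \<in> {l<..<r} \<Longrightarrow> \<bar>f x\<bar> \<le> C"
  shows "set_integrable lborel {l<..<r} f"
  by (rule set_integrable_bound[OF set_integrable_const_Ioo[of l r C]])
     (use bd in \<open>auto simp: set_borel_measurable_def intro!: AE_I2 order_trans[OF _ abs_ge_self]\<close>)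

lemma cot_deriv:
  assumes "sin (d + k * x) \<noteq> 0"
  shows "((\<lambda>x. k * cos (d + k * x) / sin (d + k * x)) has_real_derivative
     (- (k\<^sup>2 + (k * cos (d + k * x) / sin (d + k * x))\<^sup>2))) (at x)"
proof -
  have "((\<lambda>x. k * cos (d + k * x) / sin (d + k * x)) has_real_derivative
     ((k * (- sin (d + k * x) * k)) * sin (d + k * x) - k * cos (d + k * x) * (cos (d + k * x) * k)) / (sin (d + k * x))\<^sup>2) (at x)"
    using assms by (auto intro!: derivative_eq_intros simp: power2_eq_square)
  moreover have "((k * (- sin (d + k * x) * k)) * sin (d + k * x) - k * cos (d + k * x) * (cos (d + k * x) * k)) / (sin (d + k * x))\<^sup>2
      = - (k\<^sup>2 + (k * cos (d + k * x) / sin (d + k * x))\<^sup>2)"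
  proof -
    have "(sin (d + k * x))\<^sup>2 + (cos (d + k * x))\<^sup>2 = 1" by simp
    then show ?thesis using assms by (simp add: field_simps power2_eq_square)
  qed
  ultimately show ?thesis by simp
qed


context core begin

lemma riccati:
  assumes k0: "0 < k" and kP: "k * s b < pi"
  shows "k\<^sup>2 * (LINT x:{a<..<b}|lborel. (u x)\<^sup>2 / p x) \<le> E"
proof -
  define P where "P = s b"
  have P0: "0 \<le> P" unfolding P_def by (rule s_nonneg)
  define d where "d = (pi - k * P) / 2"
  have d0: "0 < d" using kP unfolding d_def P_def by simp
  define H where "H \<sigma> = k * cos (d + k * \<sigma>) / sin (d + k * \<sigma>)" for \<sigma>
  define H' where "H' \<sigma> = - (k\<^sup>2 + (H \<sigma>)\<^sup>2)" for \<sigma>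
  have sinpos: "0 < sin (d + k * \<sigma>)" if "\<sigma> \<in> {0..P}" for \<sigma>
  proof (rule sin_gt_zero)
    have "0 \<le> k * \<sigma>" using that k0 by simp
    then show "0 < d + k * \<sigma>" using d0 by linarith
    have "k * \<sigma> \<le> k * P" using that k0 by (intro mult_left_mono) auto
    moreover have "k * P < pi" using kP unfolding P_def .
    ultimately show "d + k * \<sigma> < pi" unfolding d_def by (simp add: field_simps)
  qed
  have dH: "(H has_real_derivative H' \<sigma>) (at \<sigma>)" if "\<sigma> \<in> {0..P}" for \<sigma>
    unfolding H_def H'_def using cot_deriv[of d k \<sigma>] sinpos[OF that] by simp
  have cH: "continuous_on {0..P} H"
    unfolding H_def by (intro continuous_intros) (auto dest: sinpos)
  have cH': "continuous_on {0..P} H'" unfolding H'_def using cH by (intro continuous_intros)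
  have "bounded (H ` {0..P})" using compact_continuous_image[OF cH] compact_imp_bounded by auto
  then obtain CH where CH: "\<And>\<sigma>. \<sigma> \<in> {0..P} \<Longrightarrow> \<bar>H \<sigma>\<bar> \<le> CH"
    unfolding bounded_iff by (metis atLeastAtMost_iff image_eqI real_norm_def)
  define cl where "cl \<sigma> = max 0 (min P \<sigma>)" for \<sigma>
  have cl_in: "cl \<sigma> \<in> {0..P}" for \<sigma> using P0 unfolding cl_def by auto
  have cl_s: "cl (s x) = s x" if "x \<le> b" for x
    using s_nonneg[of x] s_mono[OF that] unfolding cl_def P_def by auto
  have ccl: "continuous_on UNIV cl" unfolding cl_def by (intro continuous_intros)
  have "continuous_on UNIV (\<lambda>\<sigma>. H (cl \<sigma>))"
    by (rule continuous_on_compose2[OF cH ccl]) (use cl_in in auto)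
  then have Hm[measurable]: "(\<lambda>\<sigma>. H (cl \<sigma>)) \<in> borel_measurable borel" by (simp add: borel_measurable_continuous_onI)
  have "continuous_on UNIV (\<lambda>\<sigma>. H' (cl \<sigma>))"
    by (rule continuous_on_compose2[OF cH' ccl]) (use cl_in in auto)
  then have H'm[measurable]: "(\<lambda>\<sigma>. H' (cl \<sigma>)) \<in> borel_measurable borel" by (simp add: borel_measurable_continuous_onI)
  define hc where "hc x = H (cl (s x))" for x
  define \<eta> where "\<eta> x = H' (cl (s x)) / p x" for x
  define \<phi> where "\<phi> x = 2 * g x * u x" for x
  have hcm[measurable]: "hc \<in> borel_measurable borel"
    unfolding hc_def using measurable_compose[OF s_meas Hm] by (simp add: o_def)
  have h'sm[measurable]: "(\<lambda>x. H' (cl (s x))) \<in> borel_measurable borel"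
    using measurable_compose[OF s_meas H'm] by (simp add: o_def)
  have \<eta>m[measurable]: "\<eta> \<in> borel_measurable borel" unfolding \<eta>_def by measurable
  have \<phi>m[measurable]: "\<phi> \<in> borel_measurable borel" unfolding \<phi>_def by measurable
  have hcb: "\<bar>hc x\<bar> \<le> CH" for x unfolding hc_def by (rule CH[OF cl_in])
  have ch: "set_integrable lborel {a<..<y} \<eta> \<and> (LINT x:{a<..<y}|lborel. \<eta> x) = H (s y) - H 0"
    if "a \<le> y" "y \<le> b" for y
    using chain[of y P H' H, OF that(1) _ cH' dH] s_mono[OF that(2)]
    unfolding \<eta>_def cl_def P_def by auto
  have i\<phi>: "set_integrable lborel {a<..<b} \<phi>" unfolding \<phi>_def using u_sq(1)[of b] ab by simp
  have i\<eta>: "set_integrable lborel {a<..<b} \<eta>" using ch[of b] ab by simp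
  have int\<phi>: "(LINT x:{a<..<b}|lborel. \<phi> x) = 0" unfolding \<phi>_def using u_sq(2)[of b] ab u_b by simp
  note I = ibp[OF \<phi>m \<eta>m i\<phi> i\<eta>]
  have S: "(LINT x:{a<..<b}|lborel. \<phi> x * (hc x - H 0)) + (LINT x:{a<..<b}|lborel. (u x)\<^sup>2 * \<eta> x) = 0"
  proof -
    have "(LINT x:{a<..<b}|lborel. \<phi> x * (hc x - H 0)) = (LINT x:{a<..<b}|lborel. \<phi> x * (LINT t:{a<..<x}|lborel. \<eta> t))"
    proof (rule set_integral_cong_Ioo)
      fix x assume x: "x \<in> {a<..<b}"
      then show "\<phi> x * (hc x - H 0) = \<phi> x * (LINT t:{a<..<x}|lborel. \<eta> t)"
        using ch[of x] cl_s[of x] unfolding hc_def by auto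
    qed
    moreover have "(LINT x:{a<..<b}|lborel. (u x)\<^sup>2 * \<eta> x) = (LINT x:{a<..<b}|lborel. (LINT t:{a<..<x}|lborel. \<phi> t) * \<eta> x)"
    proof (rule set_integral_cong_Ioo)
      fix x assume x: "x \<in> {a<..<b}"
      then show "(u x)\<^sup>2 * \<eta> x = (LINT t:{a<..<x}|lborel. \<phi> t) * \<eta> x"
        using u_sq(2)[of x] unfolding \<phi>_def by auto
    qed
    ultimately show ?thesis using I(3) int\<phi> by simp
  qed
  define f2 where "f2 x = \<phi> x * hc x" for x
  define f3 where "f3 x = (u x)\<^sup>2 * (hc x)\<^sup>2 / p x" for x
  define f4 where "f4 x = (u x)\<^sup>2 / p x" for x
  have [measurable]: "f2 \<in> borel_measurable borel" "f3 \<in> borel_measurable borel" "f4 \<in> borel_measurable borel"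
    unfolding f2_def f3_def f4_def by measurable
  have i2: "set_integrable lborel {a<..<b} f2"
    unfolding f2_def by (rule set_integrable_mult_bounded[OF _ _ i\<phi>]) (use hcb in auto)
  have ub': "\<bar>u x\<bar> \<le> G" if "x \<in> {a<..<b}" for x using u_bound that by simp
  have ipb: "\<bar>1 / p x\<bar> \<le> \<beta>" for x by (rule ip_bd)
  have i3: "set_integrable lborel {a<..<b} f3"
  proof (rule bdd_int[where C="G\<^sup>2 * CH\<^sup>2 * \<beta>"])
    fix x assume x: "x \<in> {a<..<b}"
    have "\<bar>f3 x\<bar> = \<bar>u x\<bar>\<^sup>2 * \<bar>hc x\<bar>\<^sup>2 * \<bar>1 / p x\<bar>" unfolding f3_def by (simp add: abs_mult power_abs)
    also have "\<dots> \<le> G\<^sup>2 * CH\<^sup>2 * \<beta>"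
      by (intro mult_mono power_mono ub'[OF x] hcb ipb) auto
    finally show "\<bar>f3 x\<bar> \<le> G\<^sup>2 * CH\<^sup>2 * \<beta>" .
  qed simp
  have i4: "set_integrable lborel {a<..<b} f4"
  proof (rule bdd_int[where C="G\<^sup>2 * \<beta>"])
    fix x assume x: "x \<in> {a<..<b}"
    have "\<bar>f4 x\<bar> = \<bar>u x\<bar>\<^sup>2 * \<bar>1 / p x\<bar>" unfolding f4_def by (simp add: abs_mult power_abs)
    also have "\<dots> \<le> G\<^sup>2 * \<beta>"
      by (intro mult_mono power_mono ub'[OF x] ipb) auto
    finally show "\<bar>f4 x\<bar> \<le> G\<^sup>2 * \<beta>" .
  qed simp
  have S1: "(LINT x:{a<..<b}|lborel. \<phi> x * (hc x - H 0)) = (LINT x:{a<..<b}|lborel. f2 x)"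
  proof -
    have "(LINT x:{a<..<b}|lborel. \<phi> x * (hc x - H 0)) = (LINT x:{a<..<b}|lborel. f2 x - H 0 * \<phi> x)"
      by (rule set_integral_cong_Ioo) (simp add: f2_def algebra_simps)
    also have "\<dots> = (LINT x:{a<..<b}|lborel. f2 x) - (LINT x:{a<..<b}|lborel. H 0 * \<phi> x)"
      by (rule set_integral_diff(2)[OF i2 set_integrable_mult_right[OF i\<phi>]])
    also have "(LINT x:{a<..<b}|lborel. H 0 * \<phi> x) = 0" using int\<phi> by simp
    finally show ?thesis by simp
  qed
  have S2: "(LINT x:{a<..<b}|lborel. (u x)\<^sup>2 * \<eta> x) = - (k\<^sup>2 * (LINT x:{a<..<b}|lborel. f4 x)) - (LINT x:{a<..<b}|lborel. f3 x)"
  proof -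
    have "(LINT x:{a<..<b}|lborel. (u x)\<^sup>2 * \<eta> x) = (LINT x:{a<..<b}|lborel. (- k\<^sup>2) * f4 x - f3 x)"
    proof (rule set_integral_cong_Ioo)
      fix x assume x: "x \<in> {a<..<b}"
      then have "cl (s x) = s x" using cl_s by simp
      moreover have "p x \<noteq> 0" using ppos[of x] by simp
      ultimately show "(u x)\<^sup>2 * \<eta> x = (- k\<^sup>2) * f4 x - f3 x"
        unfolding \<eta>_def f4_def f3_def H'_def hc_def by (simp add: field_simps)
    qed
    also have "\<dots> = (LINT x:{a<..<b}|lborel. (- k\<^sup>2) * f4 x) - (LINT x:{a<..<b}|lborel. f3 x)"
      by (rule set_integral_diff(2)[OF set_integrable_mult_right[OF i4] i3])
    also have "(LINT x:{a<..<b}|lborel. (- k\<^sup>2) * f4 x) = (- k\<^sup>2) * (LINT x:{a<..<b}|lborel. f4 x)"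
      by (rule set_integral_mult_right)
    finally show ?thesis by simp
  qed
  have T: "0 \<le> (LINT x:{a<..<b}|lborel. p x * (g x - u x * hc x / p x)\<^sup>2)"
    by (rule set_integral_nonneg_Ioo) (metis ppos less_imp_le mult_nonneg_nonneg zero_le_power2)
  also have "\<dots> = (LINT x:{a<..<b}|lborel. (p x * (g x)\<^sup>2 - f2 x) + f3 x)"
  proof (rule set_integral_cong_Ioo)
    fix x
    have "p x \<noteq> 0" using ppos[of x] by simp
    then show "p x * (g x - u x * hc x / p x)\<^sup>2 = (p x * (g x)\<^sup>2 - f2 x) + f3 x"
      unfolding f2_def f3_def \<phi>_def by (simp add: field_simps power2_eq_square)
  qed
  also have "\<dots> = (E - (LINT x:{a<..<b}|lborel. f2 x)) + (LINT x:{a<..<b}|lborel. f3 x)"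
    unfolding E_def
    by (simp add: set_integral_add(2)[OF set_integral_diff(1)[OF pg2_int i2] i3] set_integral_diff(2)[OF pg2_int i2])
  finally have "0 \<le> E - k\<^sup>2 * (LINT x:{a<..<b}|lborel. f4 x)" using S S1 S2 by linarith
  then show ?thesis unfolding f4_def by simp
qed

end



context core begin

lemma A_nonneg: "0 \<le> (LINT x:{a<..<b}|lborel. (u x)\<^sup>2 / p x)"
  by (rule set_integral_nonneg_Ioo) (use ppos in \<open>auto intro: divide_nonneg_pos\<close>)

lemma sb_pos: "0 < s b" using s_pos[OF ab] .

lemma wirt: "(pi / s b)\<^sup>2 * (LINT x:{a<..<b}|lborel. (u x)\<^sup>2 / p x) \<le> E"
proof -
  define A where "A = (LINT x:{a<..<b}|lborel. (u x)\<^sup>2 / p x)"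
  have A0: "0 \<le> A" unfolding A_def by (rule A_nonneg)
  have P: "0 < s b" by (rule sb_pos)
  show ?thesis unfolding A_def[symmetric]
  proof (rule dense_le)
    fix t assume t: "t < (pi / s b)\<^sup>2 * A"
    show "t \<le> E"
    proof (cases "t \<le> 0")
      case True then show ?thesis using E_nonneg by linarith
    next
      case False
      then have t0: "0 < t" by simp
      have Apos: "0 < A" using t t0 A0 by (cases "A = 0") auto
      define k where "k = sqrt (t / A)"
      have k0: "0 < k" unfolding k_def using t0 Apos by simp
      have k2: "k\<^sup>2 = t / A" unfolding k_def using t0 Apos by simp
      have "k\<^sup>2 < (pi / s b)\<^sup>2" unfolding k2 using t Apos by (simp add: field_simps)
      then have "k < pi / s b" by (rule power_less_imp_less_base) (use P in simp)
      then have "k * s b < pi" using P by (simp add: field_simps)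
      then have "k\<^sup>2 * A \<le> E" using riccati[OF k0] unfolding A_def by simp
      then show ?thesis unfolding k2 using Apos by simp
    qed
  qed
qed

end

locale core2 = core +
  fixes w q :: "real \<Rightarrow> real"
  assumes wm[measurable]: "w \<in> borel_measurable borel" and wlo: "\<And>x. 1/\<beta> \<le> w x" and whi: "\<And>x. w x \<le> \<beta>"
    and qm[measurable]: "q \<in> borel_measurable borel" and qlo: "\<And>x. 0 \<le> q x"
    and nz: "\<exists>x\<in>{a<..<b}. u x \<noteq> 0"
begin

definition W where "W = (LINT x:{a<..<b}|lborel. w x)"
definition D where "D = (LINT x:{a<..<b}|lborel. \<bar>w x - W / s b * (1 / p x)\<bar>)"

lemma wpos: "0 < w x"
proof -
  have "0 < 1/\<beta>" using \<beta>1 by simp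
  then show ?thesis using wlo[of x] by linarith
qed

lemma w_ne: "w x \<noteq> 0" using wpos[of x] by simp

lemma wabs: "\<bar>w x\<bar> \<le> \<beta>" using wpos[of x] whi[of x] by simp

lemma W_pos: "0 < W"
proof -
  have "(LINT x:{a<..<b}|lborel. 1/\<beta>) \<le> W" unfolding W_def
    by (rule set_integral_mono[OF set_integrable_const_Ioo bdd_int[OF wm wabs] wlo])
  moreover have "(LINT x:{a<..<b}|lborel. 1/\<beta>) = (b - a) / \<beta>" using ab by (simp add: set_integral_const_Ioo)
  moreover have "0 < (b - a) / \<beta>" using ab \<beta>1 by simp
  ultimately show ?thesis by linarith
qed

lemma D_nonneg: "0 \<le> D" unfolding D_def by (rule set_integral_nonneg_Ioo) simp

lemma E_pos: "0 < E"
proof -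
  obtain x0 where x0: "x0 \<in> {a<..<b}" "u x0 \<noteq> 0" using nz by auto
  have "(u x0)\<^sup>2 \<le> s b * E" using cs[of x0] x0 by simp
  moreover have "0 < (u x0)\<^sup>2" using x0 by simp
  ultimately have "0 < s b * E" by linarith
  then show ?thesis using sb_pos by (simp add: zero_less_mult_iff)
qed


lemma wu_int: "set_integrable lborel {a<..<b} (\<lambda>x. w x * (u x)\<^sup>2)"
proof (rule bdd_int[where C="\<beta> * G\<^sup>2"])
  fix x assume x: "x \<in> {a<..<b}"
  have "\<bar>w x * (u x)\<^sup>2\<bar> = \<bar>w x\<bar> * \<bar>u x\<bar>\<^sup>2" by (simp add: abs_mult power_abs)
  also have "\<dots> \<le> \<beta> * G\<^sup>2" using x u_bound[of x] \<beta>1 by (intro mult_mono power_mono wabs) auto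
  finally show "\<bar>w x * (u x)\<^sup>2\<bar> \<le> \<beta> * G\<^sup>2" .
qed simp

lemma Den_pos: "0 < (LINT x:{a<..<b}|lborel. w x * (u x)\<^sup>2)"
proof -
  have nn: "0 \<le> (LINT x:{a<..<b}|lborel. w x * (u x)\<^sup>2)"
    by (rule set_integral_nonneg_Ioo) (metis wpos less_imp_le mult_nonneg_nonneg zero_le_power2)
  have "(LINT x:{a<..<b}|lborel. w x * (u x)\<^sup>2) \<noteq> 0"
  proof
    assume z: "(LINT x:{a<..<b}|lborel. w x * (u x)\<^sup>2) = 0"
    have "AE x in lborel. indicator {a<..<b} x * (w x * (u x)\<^sup>2) = 0"
      using z wu_int unfolding set_lebesgue_integral_def set_integrable_def
      by (subst (asm) integral_nonneg_eq_0_iff_AE) (auto intro!: AE_I2 mult_nonneg_nonneg less_imp_le[OF wpos] split: split_indicator)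
    then have ae: "AE x in lborel. x \<in> {a<..<b} \<longrightarrow> u x = 0"
      by eventually_elim (auto simp: w_ne split: split_indicator)
    obtain x0 where x0: "x0 \<in> {a<..<b}" "u x0 \<noteq> 0" using nz by auto
    have "(u x0)\<^sup>2 = (LINT x:{a<..<x0}|lborel. 2 * g x * u x)" using u_sq(2)[of x0] x0 by auto
    also have "\<dots> = (LINT x:{a<..<x0}|lborel. 0)"
      unfolding set_lebesgue_integral_def
      by (rule integral_cong_AE) (use x0 in \<open>auto intro!: eventually_mono[OF ae] split: split_indicator\<close>)
    finally show False using x0 by simp
  qed
  then show ?thesis using nn by linarith
qed

lemma Den_bound: "(LINT x:{a<..<b}|lborel. w x * (u x)\<^sup>2) \<le> E * (s b * (W + pi\<^sup>2 * D) / pi\<^sup>2)"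
proof -
  define c where "c = W / s b"
  define A where "A = (LINT x:{a<..<b}|lborel. (u x)\<^sup>2 / p x)"
  have c0: "0 \<le> c" unfolding c_def using W_pos sb_pos by simp
  have iA: "set_integrable lborel {a<..<b} (\<lambda>x. (u x)\<^sup>2 / p x)"
  proof (rule bdd_int[where C="G\<^sup>2 * \<beta>"])
    fix x assume x: "x \<in> {a<..<b}"
    have "\<bar>(u x)\<^sup>2 / p x\<bar> = \<bar>u x\<bar>\<^sup>2 * \<bar>1 / p x\<bar>" by (simp add: abs_mult power_abs)
    also have "\<dots> \<le> G\<^sup>2 * \<beta>" using x u_bound[of x] by (intro mult_mono power_mono ip_bd) auto
    finally show "\<bar>(u x)\<^sup>2 / p x\<bar> \<le> G\<^sup>2 * \<beta>" .
  qed simp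
  have iD: "set_integrable lborel {a<..<b} (\<lambda>x. \<bar>w x - W / s b * (1 / p x)\<bar>)"
  proof (rule bdd_int[where C="\<beta> + \<bar>W / s b\<bar> * \<beta>"])
    fix x
    have "\<bar>\<bar>w x - W / s b * (1 / p x)\<bar>\<bar> \<le> \<bar>w x\<bar> + \<bar>W / s b\<bar> * \<bar>1 / p x\<bar>" by (metis abs_abs abs_mult abs_triangle_ineq4)
    also have "\<dots> \<le> \<beta> + \<bar>W / s b\<bar> * \<beta>" by (intro add_mono mult_left_mono wabs ip_bd) auto
    finally show "\<bar>\<bar>w x - W / s b * (1 / p x)\<bar>\<bar> \<le> \<beta> + \<bar>W / s b\<bar> * \<beta>" .
  qed simp
  have "(LINT x:{a<..<b}|lborel. w x * (u x)\<^sup>2)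
      \<le> (LINT x:{a<..<b}|lborel. c * ((u x)\<^sup>2 / p x) + (s b * E) * \<bar>w x - W / s b * (1 / p x)\<bar>)"
  proof (rule set_integral_mono[OF wu_int])
    show "set_integrable lborel {a<..<b} (\<lambda>x. c * ((u x)\<^sup>2 / p x) + (s b * E) * \<bar>w x - W / s b * (1 / p x)\<bar>)"
      using set_integral_add(1)[OF set_integrable_mult_right[OF iA, of c] set_integrable_mult_right[OF iD, of "s b * E"]] .
    fix x assume x: "x \<in> {a<..<b}"
    have "p x \<noteq> 0" using ppos[of x] by simp
    then have "w x * (u x)\<^sup>2 = c * ((u x)\<^sup>2 / p x) + (w x - W / s b * (1 / p x)) * (u x)\<^sup>2"
      unfolding c_def by (simp add: field_simps)
    also have "(w x - W / s b * (1 / p x)) * (u x)\<^sup>2 \<le> \<bar>w x - W / s b * (1 / p x)\<bar> * (s b * E)"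
    proof -
      have "(w x - W / s b * (1 / p x)) * (u x)\<^sup>2 \<le> \<bar>w x - W / s b * (1 / p x)\<bar> * (u x)\<^sup>2"
        by (intro mult_right_mono) auto
      also have "\<dots> \<le> \<bar>w x - W / s b * (1 / p x)\<bar> * (s b * E)"
        using cs[of x] x by (intro mult_left_mono) auto
      finally show ?thesis .
    qed
    finally show "w x * (u x)\<^sup>2 \<le> c * ((u x)\<^sup>2 / p x) + (s b * E) * \<bar>w x - W / s b * (1 / p x)\<bar>"
      by (simp add: mult.commute)
  qed
  also have "\<dots> = c * A + (s b * E) * D"
    unfolding A_def D_def
    by (simp only: set_integral_add(2)[OF set_integrable_mult_right[OF iA, of c] set_integrable_mult_right[OF iD, of "s b * E"]] set_integral_mult_right)
  also have "\<dots> \<le> c * ((s b / pi)\<^sup>2 * E) + (s b * E) * D"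
  proof -
    have "(pi / s b)\<^sup>2 * A \<le> E" unfolding A_def by (rule wirt)
    then have "A \<le> (s b / pi)\<^sup>2 * E" using sb_pos by (simp add: field_simps power2_eq_square)
    then show ?thesis using c0 by (intro add_right_mono mult_left_mono) auto
  qed
  also have "\<dots> = E * (s b * (W + pi\<^sup>2 * D) / pi\<^sup>2)"
    unfolding c_def using sb_pos by (simp add: field_simps power2_eq_square)
  finally show ?thesis .
qed

lemma core_main:
  "pi\<^sup>2 / (s b * (W + pi\<^sup>2 * D)) \<le> (E + (LINT x:{a<..<b}|lborel. q x * (u x)\<^sup>2)) / (LINT x:{a<..<b}|lborel. w x * (u x)\<^sup>2)"
proof -
  define Den where "Den = (LINT x:{a<..<b}|lborel. w x * (u x)\<^sup>2)"
  define K where "K = s b * (W + pi\<^sup>2 * D) / pi\<^sup>2"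
  have Kpos: "0 < K" unfolding K_def using sb_pos W_pos D_nonneg by (intro divide_pos_pos mult_pos_pos add_pos_nonneg) auto
  have Dp: "0 < Den" unfolding Den_def by (rule Den_pos)
  have DK: "Den \<le> E * K" unfolding Den_def K_def by (rule Den_bound)
  have Q: "0 \<le> (LINT x:{a<..<b}|lborel. q x * (u x)\<^sup>2)"
    by (rule set_integral_nonneg_Ioo) (use qlo in auto)
  have "pi\<^sup>2 / (s b * (W + pi\<^sup>2 * D)) = 1 / K" unfolding K_def by simp
  also have "\<dots> = E / (E * K)" using E_pos by simp
  also have "\<dots> \<le> E / Den" using E_pos Dp DK by (intro divide_left_mono) auto
  also have "\<dots> \<le> (E + (LINT x:{a<..<b}|lborel. q x * (u x)\<^sup>2)) / Den"
    using Q Dp by (intro divide_right_mono) auto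
  finally show ?thesis unfolding Den_def .
qed

end



lemma TL:
  fixes f f' :: "real \<Rightarrow> real"
  assumes fm: "f \<in> borel_measurable lebesgue" and f'm: "f' \<in> borel_measurable borel"
    and ae: "AE x in lborel. f x = f' x" and A: "A \<in> sets borel"
  shows "(LINT x:A|lebesgue. f x) = (LINT x:A|lborel. f' x)"
    and "set_integrable lebesgue A f \<longleftrightarrow> set_integrable lborel A f'"
proof -
  have Al: "A \<in> sets lebesgue" using A by simp
  have Ab: "A \<in> sets lborel" using A by simp
  have f'm': "f' \<in> borel_measurable lborel" using f'm by simp
  have m1: "(\<lambda>x. indicator A x *\<^sub>R f x) \<in> borel_measurable lebesgue"
    by (intro borel_measurable_scaleR borel_measurable_indicator Al fm)
  have m2b: "(\<lambda>x. indicator A x *\<^sub>R f' x) \<in> borel_measurable lborel"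
    by (intro borel_measurable_scaleR borel_measurable_indicator Ab f'm')
  then have m2: "(\<lambda>x. indicator A x *\<^sub>R f' x) \<in> borel_measurable lebesgue" by (rule measurable_completion)
  have ae': "AE x in lebesgue. indicator A x *\<^sub>R f x = indicator A x *\<^sub>R f' x"
    by (rule AE_completion) (use ae in \<open>auto elim: eventually_mono\<close>)
  have "(LINT x:A|lebesgue. f x) = (\<integral>x. indicator A x *\<^sub>R f' x \<partial>lebesgue)"
    unfolding set_lebesgue_integral_def by (rule integral_cong_AE[OF m1 m2 ae'])
  also have "\<dots> = (LINT x:A|lborel. f' x)"
    unfolding set_lebesgue_integral_def by (rule integral_completion[OF m2b])
  finally show "(LINT x:A|lebesgue. f x) = (LINT x:A|lborel. f' x)" .
  have "set_integrable lebesgue A f \<longleftrightarrow> integrable lebesgue (\<lambda>x. indicator A x *\<^sub>R f' x)"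
    unfolding set_integrable_def by (rule integrable_cong_AE[OF m1 m2 ae'])
  also have "\<dots> \<longleftrightarrow> set_integrable lborel A f'"
    unfolding set_integrable_def by (rule integrable_completion[OF m2b])
  finally show "set_integrable lebesgue A f \<longleftrightarrow> set_integrable lborel A f'" .
qed

lemma borel_version:
  fixes f :: "real \<Rightarrow> real"
  assumes "f \<in> borel_measurable lebesgue"
  obtains f' where "f' \<in> borel_measurable borel" "AE x in lborel. f x = f' x"
proof -
  obtain f' where "f' \<in> borel_measurable lborel" "AE x in lborel. f x = f' x"
    using completion_ex_borel_measurable_real[OF assms] by auto
  then show ?thesis using that by simp
qed




lemma clamp_props:
  fixes \<beta> lo y :: real
  assumes "lo \<le> \<beta>"
  shows "lo \<le> max lo (min \<beta> y)" "max lo (min \<beta> y) \<le> \<beta>" "lo \<le> y \<and> y \<le> \<beta> \<Longrightarrow> max lo (min \<beta> y) = y"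
  using assms by auto

lemma element_bound:
  fixes \<beta> a b :: real and p q w u g :: "real \<Rightarrow> real"
  assumes "1 < \<beta>"
    and pm: "p \<in> borel_measurable lebesgue" and qm: "q \<in> borel_measurable lebesgue" and wm: "w \<in> borel_measurable lebesgue"
    and qb: "AE x in lebesgue. 0 \<le> q x \<and> q x \<le> \<beta>"
    and pb: "AE x in lebesgue. 1 / \<beta> \<le> p x \<and> p x \<le> \<beta>"
    and wb: "AE x in lebesgue. 1 / \<beta> \<le> w x \<and> w x \<le> \<beta>"
    and ab: "a < b"
    and H: "H10 a b u g" and nz: "\<exists>x\<in>{a<..<b}. u x \<noteq> 0"
  shows "pi\<^sup>2 / (avg a b (\<lambda>x. 1 / p x) *
             (avg a b w + pi\<^sup>2 * avg a b (\<lambda>x. \<bar>w x - avg a b w / avg a b (\<lambda>x. 1 / p x) * (1 / p x)\<bar>))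
             * (b - a)\<^sup>2) \<le> rayleigh a b p q w u g"
proof -
  have bb: "1 < \<beta> * \<beta>" using assms(1) by (metis less_1_mult)
  have b1: "1/\<beta> \<le> \<beta>" using assms(1) bb by (simp add: field_simps)
  have gm: "g \<in> borel_measurable lebesgue" and gi: "set_integrable lebesgue {a<..<b} g"
    and g2i: "set_integrable lebesgue {a<..<b} (\<lambda>x. (g x)\<^sup>2)"
    and ueq: "\<And>x. x \<in> {a..b} \<Longrightarrow> u x = (LINT t:{a<..<x}|lebesgue. g t)" and ub: "u b = 0"
    using H unfolding H10_def by auto
  note [measurable] = pm qm wm gm
  obtain p0 where p0m[measurable]: "p0 \<in> borel_measurable borel" and p0e: "AE x in lborel. p x = p0 x"
    using borel_version[OF pm] by blast
  obtain w0 where w0m[measurable]: "w0 \<in> borel_measurable borel" and w0e: "AE x in lborel. w x = w0 x"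
    using borel_version[OF wm] by blast
  obtain q0 where q0m[measurable]: "q0 \<in> borel_measurable borel" and q0e: "AE x in lborel. q x = q0 x"
    using borel_version[OF qm] by blast
  obtain g' where g'm[measurable]: "g' \<in> borel_measurable borel" and g'e: "AE x in lborel. g x = g' x"
    using borel_version[OF gm] by blast
  define p' where "p' x = max (1/\<beta>) (min \<beta> (p0 x))" for x
  define w' where "w' x = max (1/\<beta>) (min \<beta> (w0 x))" for x
  define q' where "q' x = max 0 (min \<beta> (q0 x))" for x
  have p'm[measurable]: "p' \<in> borel_measurable borel" unfolding p'_def by measurable
  have w'm[measurable]: "w' \<in> borel_measurable borel" unfolding w'_def by measurable
  have q'm[measurable]: "q' \<in> borel_measurable borel" unfolding q'_def by measurable
  have pb': "AE x in lborel. 1 / \<beta> \<le> p x \<and> p x \<le> \<beta>" using pb by (simp add: AE_completion_iff)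
  have wb': "AE x in lborel. 1 / \<beta> \<le> w x \<and> w x \<le> \<beta>" using wb by (simp add: AE_completion_iff)
  have qb': "AE x in lborel. 0 \<le> q x \<and> q x \<le> \<beta>" using qb by (simp add: AE_completion_iff)
  have pe: "AE x in lborel. p x = p' x" using pb' p0e by eventually_elim (auto simp: p'_def)
  have we: "AE x in lborel. w x = w' x" using wb' w0e by eventually_elim (auto simp: w'_def)
  have qe: "AE x in lborel. q x = q' x" using qb' q0e by eventually_elim (use assms(1) in \<open>auto simp: q'_def\<close>)
  have p'lo: "1/\<beta> \<le> p' x" and p'hi: "p' x \<le> \<beta>" for x unfolding p'_def using b1 by auto
  have w'lo: "1/\<beta> \<le> w' x" and w'hi: "w' x \<le> \<beta>" for x unfolding w'_def using b1 by auto
  have q'lo: "0 \<le> q' x" for x unfolding q'_def using assms(1) by auto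
  have gi': "set_integrable lborel {a<..<b} g'" using TL(2)[OF gm g'm g'e] gi by simp
  have g2i': "set_integrable lborel {a<..<b} (\<lambda>x. (g' x)\<^sup>2)"
  proof -
    have ae2: "AE x in lborel. (g x)\<^sup>2 = (g' x)\<^sup>2" using g'e by (auto elim: eventually_mono)
    have m1: "(\<lambda>x. (g x)\<^sup>2) \<in> borel_measurable lebesgue" by measurable
    have m2: "(\<lambda>x. (g' x)\<^sup>2) \<in> borel_measurable borel" by measurable
    show ?thesis using iffD1[OF TL(2)[OF m1 m2 ae2, of "{a<..<b}"] g2i] by simp
  qed
  have ub': "(LINT t:{a<..<b}|lborel. g' t) = 0"
    using TL(1)[OF gm g'm g'e] ueq[of b] ub ab by simp
  interpret C1: core p' \<beta> a b g'
    by unfold_locales (use p'lo p'hi assms(1) ab gi' g2i' ub' in auto)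
  have ueq': "u x = C1.u x" if "x \<in> {a..b}" for x
    using ueq[OF that] TL(1)[OF gm g'm g'e] unfolding C1.u_def by simp
  have nz': "\<exists>x\<in>{a<..<b}. C1.u x \<noteq> 0" using nz ueq' by auto
  interpret C: core2 p' \<beta> a b g' w' q'
    by unfold_locales (use w'lo w'hi q'lo nz' in auto)
  have Cum[measurable]: "C1.u \<in> borel_measurable lebesgue" using C1.u_meas by (simp add: measurable_completion)
  have E: "(LINT x:{a<..<b}|lebesgue. p x * (g x)\<^sup>2) = C1.E"
    unfolding C1.E_def using pe g'e by (intro TL(1)) (auto elim: eventually_mono)
  have Q: "(LINT x:{a<..<b}|lebesgue. q x * (u x)\<^sup>2) = (LINT x:{a<..<b}|lborel. q' x * (C1.u x)\<^sup>2)"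
  proof -
    have "(LINT x:{a<..<b}|lebesgue. q x * (u x)\<^sup>2) = (LINT x:{a<..<b}|lebesgue. q x * (C1.u x)\<^sup>2)"
      by (rule set_lebesgue_integral_cong) (use ueq' in auto)
    also have "\<dots> = (LINT x:{a<..<b}|lborel. q' x * (C1.u x)\<^sup>2)"
      using qe by (intro TL(1)) (auto elim: eventually_mono)
    finally show ?thesis .
  qed
  have Dn: "(LINT x:{a<..<b}|lebesgue. w x * (u x)\<^sup>2) = (LINT x:{a<..<b}|lborel. w' x * (C1.u x)\<^sup>2)"
  proof -
    have "(LINT x:{a<..<b}|lebesgue. w x * (u x)\<^sup>2) = (LINT x:{a<..<b}|lebesgue. w x * (C1.u x)\<^sup>2)"
      by (rule set_lebesgue_integral_cong) (use ueq' in auto)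
    also have "\<dots> = (LINT x:{a<..<b}|lborel. w' x * (C1.u x)\<^sup>2)"
      using we by (intro TL(1)) (auto elim: eventually_mono)
    finally show ?thesis .
  qed
  define L where "L = b - a"
  have L0: "0 < L" unfolding L_def using ab by simp
  have S: "avg a b (\<lambda>x. 1 / p x) = C1.s b / L"
    unfolding avg_def L_def C1.s_def using pe by (subst TL(1)) (auto elim: eventually_mono)
  have Wv: "avg a b w = C.W / L"
    unfolding avg_def L_def C.W_def using we by (subst TL(1)) (auto elim: eventually_mono)
  have ratio: "avg a b w / avg a b (\<lambda>x. 1 / p x) = C.W / C1.s b"
    unfolding S Wv using L0 by simp
  have Dv: "avg a b (\<lambda>x. \<bar>w x - avg a b w / avg a b (\<lambda>x. 1 / p x) * (1 / p x)\<bar>) = C.D / L"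
    unfolding ratio unfolding avg_def L_def C.D_def using we pe by (subst TL(1)) (auto elim: eventually_mono)
  have "pi\<^sup>2 / (avg a b (\<lambda>x. 1 / p x) *
             (avg a b w + pi\<^sup>2 * avg a b (\<lambda>x. \<bar>w x - avg a b w / avg a b (\<lambda>x. 1 / p x) * (1 / p x)\<bar>))
             * (b - a)\<^sup>2) = pi\<^sup>2 / (C1.s b * (C.W + pi\<^sup>2 * C.D))"
  proof -
    have "C1.s b / L * (C.W / L + pi\<^sup>2 * (C.D / L)) * L\<^sup>2 = C1.s b * (C.W + pi\<^sup>2 * C.D)"
      using L0 by (simp add: field_simps power2_eq_square)
    then show ?thesis unfolding Dv unfolding S Wv L_def[symmetric] by simp
  qed
  also have "\<dots> \<le> (C1.E + (LINT x:{a<..<b}|lborel. q' x * (C1.u x)\<^sup>2)) / (LINT x:{a<..<b}|lborel. w' x * (C1.u x)\<^sup>2)"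
    by (rule C.core_main)
  also have "\<dots> = rayleigh a b p q w u g"
    unfolding rayleigh_def E Q Dn ..
  finally show ?thesis .
qed




lemma lin_int:
  fixes a x m :: real
  assumes "a \<le> x"
  shows "(LINT t:{a<..<x}|lebesgue. t - m) = ((x - m)\<^sup>2 - (a - m)\<^sup>2) / 2"
proof -
  have m2: "(\<lambda>t::real. t - m) \<in> borel_measurable borel" by measurable
  have m1: "(\<lambda>t::real. t - m) \<in> borel_measurable lebesgue" by (rule measurable_completion) (use m2 in simp)
  have "(LINT t:{a<..<x}|lebesgue. t - m) = (LINT t:{a<..<x}|lborel. t - m)"
    by (rule TL(1)[OF m1 m2]) auto
  also have "\<dots> = (LBINT t=ereal a..ereal x. t - m)"
    using assms by (simp add: interval_integral_Ioo)
  also have "\<dots> = (x - m)\<^sup>2 / 2 - (a - m)\<^sup>2 / 2"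
  proof (rule interval_integral_FTC_finite)
    show "continuous_on {min a x..max a x} (\<lambda>t. t - m)" by (intro continuous_intros)
    fix t
    have "((\<lambda>t. (t - m)\<^sup>2 / 2) has_real_derivative (t - m)) (at t)"
      by (auto intro!: derivative_eq_intros simp: power2_eq_square)
    then show "((\<lambda>t. (t - m)\<^sup>2 / 2) has_vector_derivative t - m) (at t within {min a x..max a x})"
      by (simp add: has_real_derivative_iff_has_vector_derivative has_vector_derivative_at_within)
  qed
  finally show ?thesis by (simp add: field_simps)
qed

lemma nonempty_H10:
  fixes a b :: real
  assumes ab: "a < b"
  shows "\<exists>u g. H10 a b u g \<and> (\<exists>x\<in>{a<..<b}. u x \<noteq> 0)"
proof -
  define m where "m = (a + b) / 2"
  define g where "g t = t - m" for t
  define u where "u x = (LINT t:{a<..<x}|lebesgue. g t)" for x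
  have ueq: "u x = ((x - m)\<^sup>2 - (a - m)\<^sup>2) / 2" if "a \<le> x" for x
    unfolding u_def g_def using lin_int[OF that] .
  have gm2: "g \<in> borel_measurable borel" unfolding g_def by measurable
  have gm1: "g \<in> borel_measurable lebesgue" by (rule measurable_completion) (use gm2 in simp)
  have gm4: "(\<lambda>x. (g x)\<^sup>2) \<in> borel_measurable borel" unfolding g_def by measurable
  have gm3: "(\<lambda>x. (g x)\<^sup>2) \<in> borel_measurable lebesgue" by (rule measurable_completion) (use gm4 in simp)
  have gi: "set_integrable lebesgue {a<..<b} g"
  proof -
    have "set_integrable lborel {a..b} g" unfolding g_def
      by (rule borel_integrable_atLeastAtMost') (intro continuous_intros)
    then have "set_integrable lborel {a<..<b} g" by (rule set_integrable_subset) auto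
    then show ?thesis by (subst TL(2)[OF gm1 gm2]) auto
  qed
  have g2i: "set_integrable lebesgue {a<..<b} (\<lambda>x. (g x)\<^sup>2)"
  proof -
    have "set_integrable lborel {a..b} (\<lambda>x. (g x)\<^sup>2)" unfolding g_def
      by (rule borel_integrable_atLeastAtMost') (intro continuous_intros)
    then have "set_integrable lborel {a<..<b} (\<lambda>x. (g x)\<^sup>2)" by (rule set_integrable_subset) auto
    then show ?thesis by (subst TL(2)[OF gm3 gm4]) auto
  qed
  have "H10 a b u g"
    unfolding H10_def
  proof (intro conjI ballI)
    show "g \<in> borel_measurable lebesgue" by (rule gm1)
    show "set_integrable lebesgue {a<..<b} g" by (rule gi)
    show "set_integrable lebesgue {a<..<b} (\<lambda>x. (g x)\<^sup>2)" by (rule g2i)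
    show "u x = (LINT t:{a<..<x}|lebesgue. g t)" for x unfolding u_def ..
    show "u b = 0" using ueq[of b] ab unfolding m_def by (simp add: field_simps power2_eq_square)
  qed
  moreover have "m \<in> {a<..<b}" "u m \<noteq> 0" using ab ueq[of m] unfolding m_def by auto
  ultimately show ?thesis by blast
qed

theorem mainTheorem5:
  fixes \<beta> a b :: real and p q w :: "real \<Rightarrow> real"
  assumes "1 < \<beta>"
    and "p \<in> borel_measurable lebesgue" "q \<in> borel_measurable lebesgue" "w \<in> borel_measurable lebesgue"
    and "AE x in lebesgue. 0 \<le> q x \<and> q x \<le> \<beta>"
    and "AE x in lebesgue. 1 / \<beta> \<le> p x \<and> p x \<le> \<beta>"
    and "AE x in lebesgue. 1 / \<beta> \<le> w x \<and> w x \<le> \<beta>"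
    and "a < b"
  shows "lambdaJ a b p q w \<ge>
    pi\<^sup>2 / (avg a b (\<lambda>x. 1 / p x) *
             (avg a b w + pi\<^sup>2 * avg a b (\<lambda>x. \<bar>w x - avg a b w / avg a b (\<lambda>x. 1 / p x) * (1 / p x)\<bar>))
             * (b - a)\<^sup>2)"
  unfolding lambdaJ_def
proof (rule cInf_greatest)
  show "{rayleigh a b p q w u g | u g. H10 a b u g \<and> (\<exists>x\<in>{a<..<b}. u x \<noteq> 0)} \<noteq> {}"
    using nonempty_H10[OF assms(8)] by blast
  fix r assume "r \<in> {rayleigh a b p q w u g | u g. H10 a b u g \<and> (\<exists>x\<in>{a<..<b}. u x \<noteq> 0)}"
  then obtain u g where r: "r = rayleigh a b p q w u g" and H: "H10 a b u g" and nz: "\<exists>x\<in>{a<..<b}. u x \<noteq> 0"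
    by blast
  show "pi\<^sup>2 / (avg a b (\<lambda>x. 1 / p x) *
             (avg a b w + pi\<^sup>2 * avg a b (\<lambda>x. \<bar>w x - avg a b w / avg a b (\<lambda>x. 1 / p x) * (1 / p x)\<bar>))
             * (b - a)\<^sup>2) \<le> r"
    unfolding r by (rule element_bound[OF assms H nz])
qed


end
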